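(* Let $m$ be a positive integer whose Collatz trajectory $\{T^k(m)\}_{k=1}^\infty$ is unbounded (diverging). Then the function \[ F(z)=\sum_{p=0}^\infty z^{m2^p}+\sum_{k=1}^\infty z^{T^k(m)} \] belongs to $A(D)$ and is a fixed point of $\mathcal{T}$: $\mathcal{T}F=F$.
   Context: $T:\mathbb{Z}\to\mathbb{Z}$ is the (reduced) Collatz map: $T(n)=\frac{3n+1}{2}$ for odd $n$, $T(n)=\frac n2$ for even $n$; $T^k$ is its $k$-th iterate. $D$ is the open unit disk and $A(D)$ the space of holomorphic functions on $D$. The operator $\mathcal{T}$ is defined on $A(D)$ by $\mathcal{T}\big(\sum_{n\ge0}a_nz^n\big)=\sum_{n\ge0}a_nz^{T(n)}$, i.e. $\mathcal{T}z^n=z^{T(n)}$ (equivalently $\mathcal{T}f(z)=(Sf)(\sqrt z)+\sqrt z\,(Af)(z^{3/2})$ with $S,A$ the even and odd parts of $f$). *)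

theory Defs
  imports "HOL-Analysis.Analysis"
begin

definition collatz :: "int \<Rightarrow> int" where
  "collatz n = (if odd n then (3 * n + 1) div 2 else n div 2)"

text \<open>The operator on A(D): sum a_n z^n is sent to sum a_n z^(T n), where a_n is the
  n-th Taylor coefficient of f at 0 (T maps nonnegative integers to nonnegative integers).\<close>
definition collatz_op :: "(complex \<Rightarrow> complex) \<Rightarrow> complex \<Rightarrow> complex" where
  "collatz_op f z = (\<Sum>n. (deriv ^^ n) f 0 / fact n * z ^ nat (collatz (int n)))"

definition collatz_F :: "int \<Rightarrow> complex \<Rightarrow> complex" where
  "collatz_F m z = (\<Sum>p. z ^ nat (m * 2 ^ p)) + (\<Sum>k. z ^ nat ((collatz ^^ Suc k) m))"

end

theory Submission
  imports Defs
begin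


lemma collatz_pos: "n > 0 \<Longrightarrow> collatz n > 0"
  unfolding collatz_def by (auto elim!: oddE)

lemma iter_pos: "m > 0 \<Longrightarrow> (collatz ^^ k) m > 0"
  by (induction k) (auto intro: collatz_pos)

lemma collatz_double: "collatz (x * 2) = x"
  unfolding collatz_def by simp

lemma collatz_pow2: "(collatz ^^ p) (x * 2 ^ p) = x"
proof (induction p arbitrary: x)
  case (Suc p)
  have "(collatz ^^ Suc p) (x * 2 ^ Suc p) = (collatz ^^ p) (collatz ((x * 2 ^ p) * 2))"
    by (metis comp_apply funpow_Suc_right mult.assoc power_Suc2)
  also have "\<dots> = x" by (simp add: collatz_double Suc)
  finally show ?case .
qed simp

lemma repeat_bdd:
  assumes "(collatz ^^ i) m = (collatz ^^ j) m" "i < j"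
  shows "bdd_above (range (\<lambda>k. (collatz ^^ Suc k) m))"
proof -
  define t where "t k = (collatz ^^ k) m" for k
  have step: "t (Suc k) = collatz (t k)" for k by (simp add: t_def)
  have sh: "t (j + n) = t (i + n)" for n
    by (induction n) (use assms in \<open>simp_all add: t_def\<close>)
  have mem: "t n \<in> t ` {..<j}" for n
  proof (induction n rule: less_induct)
    case (less n)
    show ?case
    proof (cases "n < j")
      case True then show ?thesis by auto
    next
      case False
      then have "t n = t (i + (n - j))" using sh[of "n - j"] by simp
      moreover have "i + (n - j) < n" using False assms(2) by simp
      ultimately show ?thesis using less by simp
    qed
  qed
  have "range (\<lambda>k. (collatz ^^ Suc k) m) \<subseteq> t ` {..<j}"
    using mem unfolding t_def by blast
  moreover have "bdd_above (t ` {..<j})" by (rule bdd_above_finite) simp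
  ultimately show ?thesis by (meson bdd_above_mono)
qed

lemma iter_inj:
  assumes "\<not> bdd_above (range (\<lambda>k. (collatz ^^ Suc k) m))"
  shows "inj (\<lambda>k. (collatz ^^ k) m)"
proof (rule injI, rule ccontr)
  fix i j assume *: "(collatz ^^ i) m = (collatz ^^ j) m" "i \<noteq> j"
  show False
  proof (cases "i < j")
    case True with repeat_bdd[OF *(1) True] assms show False by blast
  next
    case False with * repeat_bdd[of j m i] assms show False by simp
  qed
qed

lemma iter_not_pow2:
  assumes "\<not> bdd_above (range (\<lambda>k. (collatz ^^ Suc k) m))"
  shows "(collatz ^^ Suc k) m \<noteq> m * 2 ^ p"
proof
  assume h: "(collatz ^^ Suc k) m = m * 2 ^ p"
  have "(collatz ^^ (p + Suc k)) m = (collatz ^^ p) ((collatz ^^ Suc k) m)"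
    by (simp only: funpow_add comp_def)
  also have "\<dots> = m" using h collatz_pow2 by simp
  finally have "(collatz ^^ (p + Suc k)) m = (collatz ^^ 0) m" by simp
  then have "p + Suc k = 0" using injD[OF iter_inj[OF assms]] by blast
  then show False by simp
qed



lemma geom_summable_on:
  fixes z :: complex assumes "norm z < 1"
  shows "(\<lambda>n. z ^ n) summable_on A"
proof -
  have "(\<lambda>n. z ^ n) summable_on UNIV"
    by (rule norm_summable_imp_summable_on) (simp add: norm_power summable_geometric assms)
  then show ?thesis by (rule summable_on_subset_banach) simp
qed

lemma suminf_eq_infsum:
  fixes f :: "nat \<Rightarrow> complex"
  assumes "f summable_on UNIV" shows "suminf f = infsum f UNIV"
  using has_sum_imp_sums[OF has_sum_infsum[OF assms]] by (simp add: sums_iff)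

lemma inj_summ:
  fixes z :: complex and g :: "nat \<Rightarrow> nat"
  assumes "inj g" "norm z < 1"
  shows "(\<lambda>p. z ^ g p) summable_on UNIV" "summable (\<lambda>p. z ^ g p)"
    "infsum (\<lambda>n. z ^ n) (range g) = (\<Sum>p. z ^ g p)"
proof -
  have s: "(\<lambda>n. z ^ n) summable_on range g" using geom_summable_on assms by blast
  show 1: "(\<lambda>p. z ^ g p) summable_on UNIV"
    using s summable_on_reindex[OF assms(1), of "\<lambda>n. z ^ n"]
    by (simp add: comp_def)
  show "summable (\<lambda>p. z ^ g p)" using summable_on_imp_summable[OF 1] .
  show "infsum (\<lambda>n. z ^ n) (range g) = (\<Sum>p. z ^ g p)"
    using infsum_reindex[OF assms(1), of "\<lambda>n. z ^ n"]
      suminf_eq_infsum[OF 1] by (simp add: comp_def)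
qed



theorem mainTheorem4:
  fixes m :: int
  assumes "m > 0"
    and "\<not> bdd_above (range (\<lambda>k. (collatz ^^ Suc k) m))"
  shows "collatz_F m holomorphic_on ball 0 1
         \<and> (\<forall>z \<in> ball 0 1. collatz_op (collatz_F m) z = collatz_F m z)"
proof -
  note mpos = assms(1) and unb = assms(2)
  define e1 where "e1 p = nat (m * 2 ^ p)" for p
  define e2 where "e2 k = nat ((collatz ^^ Suc k) m)" for k
  define S where "S = range e1 \<union> range e2"
  define a :: "nat \<Rightarrow> complex" where "a n = (if n \<in> S then 1 else 0)" for n
  define A where "A = Abs_fps a"
  define g1 where "g1 p = (if p = 0 then e2 0 else e1 (p - 1))" for p
  define Tn where "Tn n = nat (collatz (int n))" for n
  have inj1: "inj e1"
  proof (rule injI)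
    fix p q assume h: "e1 p = e1 q"
    have ie: "int (e1 p) = m * 2 ^ p" for p using mpos by (simp add: e1_def)
    have "m * 2 ^ p = int (e1 p)" by (simp only: ie)
    also have "\<dots> = int (e1 q)" using h by simp
    also have "\<dots> = m * 2 ^ q" by (simp only: ie)
    finally have "m * 2 ^ p = m * 2 ^ q" .
    then have "(2::int) ^ p = 2 ^ q" using mpos by simp
    then show "p = q" using power_inject_exp[of "2::int"] by simp
  qed
  have inj2: "inj e2"
  proof (rule injI)
    fix p q assume "e2 p = e2 q"
    then have "(collatz ^^ Suc p) m = (collatz ^^ Suc q) m"
      using iter_pos[OF mpos, of "Suc p"] iter_pos[OF mpos, of "Suc q"] unfolding e2_def by simp
    then have "Suc p = Suc q" using injD[OF iter_inj[OF unb]] by blast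
    then show "p = q" by simp
  qed
  have disj: "range e1 \<inter> range e2 = {}"
  proof (rule ccontr)
    assume "range e1 \<inter> range e2 \<noteq> {}"
    then obtain p k where "e1 p = e2 k" by auto
    then have "m * 2 ^ p = (collatz ^^ Suc k) m"
      using iter_pos[OF mpos, of "Suc k"] mpos unfolding e1_def e2_def by simp
    then show False using iter_not_pow2[OF unb, of k p] by simp
  qed
  have injg1: "inj g1"
  proof (rule injI)
    fix p q assume h: "g1 p = g1 q"
    show "p = q"
    proof (cases "p = 0"; cases "q = 0")
      assume "p \<noteq> 0" "q \<noteq> 0"
      then show ?thesis using h injD[OF inj1, of "p - 1" "q - 1"] unfolding g1_def by simp
    next
      assume "p = 0" "q \<noteq> 0"
      then show ?thesis using h disj unfolding g1_def by (metis disjoint_iff rangeI)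
    next
      assume "p \<noteq> 0" "q = 0"
      then show ?thesis using h disj unfolding g1_def by (metis disjoint_iff rangeI)
    qed simp
  qed
  have Tn_e1: "Tn (e1 p) = g1 p" for p
  proof (cases p)
    case 0 then show ?thesis using mpos unfolding Tn_def e1_def g1_def e2_def by simp
  next
    case (Suc q)
    have "collatz (m * 2 ^ p) = m * 2 ^ q"
      using collatz_double[of "m * 2 ^ q"] Suc by (simp add: mult_ac)
    then show ?thesis using mpos Suc unfolding Tn_def e1_def g1_def by simp
  qed
  have Tn_e2: "Tn (e2 k) = e2 (Suc k)" for k
    using iter_pos[OF mpos, of "Suc k"] unfolding Tn_def e2_def by simp
  have Fz: "collatz_F m z = (\<Sum>p. z ^ e1 p) + (\<Sum>k. z ^ e2 k)" for z
    unfolding collatz_F_def e1_def e2_def by simp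
  have evalA: "eval_fps A z = collatz_F m z" if z: "norm z < 1" for z
  proof -
    have sS: "(\<lambda>n. z ^ n) summable_on S" using geom_summable_on[OF z] .
    have eq: "(\<lambda>n. a n * z ^ n) summable_on UNIV \<longleftrightarrow> (\<lambda>n. z ^ n) summable_on S"
      by (rule summable_on_cong_neutral) (auto simp: a_def)
    have "eval_fps A z = (\<Sum>n. a n * z ^ n)" unfolding eval_fps_def A_def by simp
    also have "\<dots> = infsum (\<lambda>n. a n * z ^ n) UNIV"
      using suminf_eq_infsum eq sS by blast
    also have "\<dots> = infsum (\<lambda>n. z ^ n) S"
      by (rule infsum_cong_neutral) (auto simp: a_def)
    also have "\<dots> = infsum (\<lambda>n. z ^ n) (range e1) + infsum (\<lambda>n. z ^ n) (range e2)"
      unfolding S_def by (rule infsum_Un_disjoint) (use geom_summable_on[OF z] disj in auto)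
    also have "\<dots> = collatz_F m z"
      using inj_summ(3)[OF inj1 z] inj_summ(3)[OF inj2 z] Fz by simp
    finally show ?thesis .
  qed
  have rad: "fps_conv_radius A \<ge> 1"
    unfolding fps_conv_radius_def
  proof (rule conv_radius_geI_ex')
    fix r :: real assume r: "0 < r" "ereal r < 1"
    then have r1: "r < 1" by simp
    show "summable (\<lambda>n. fps_nth A n * of_real r ^ n)"
    proof (rule summable_comparison_test)
      show "\<exists>N. \<forall>n\<ge>N. norm (fps_nth A n * of_real r ^ n) \<le> r ^ n"
        using r by (auto simp: A_def a_def norm_mult norm_power)
      show "summable (\<lambda>n. r ^ n)" using r r1 by (intro summable_geometric) simp
    qed
  qed
  have ev: "eventually (\<lambda>z. eval_fps A z = collatz_F m z) (nhds 0)"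
  proof (rule eventually_mono[OF eventually_nhds_in_open[of "ball 0 1" 0]])
    show "open (ball (0::complex) 1)" by simp
    show "(0::complex) \<in> ball 0 1" by simp
    fix z :: complex assume "z \<in> ball 0 1"
    then have "norm z < 1" by (simp add: dist_norm)
    then show "eval_fps A z = collatz_F m z" by (rule evalA)
  qed
  have rad0: "fps_conv_radius A > 0"
  proof -
    have "(0::ereal) < 1" by simp
    from this rad show ?thesis by (rule less_le_trans)
  qed
  have expn: "collatz_F m has_fps_expansion A"
    unfolding has_fps_expansion_def using rad0 ev by blast
  have coef: "(deriv ^^ n) (collatz_F m) 0 / fact n = a n" for n
    using fps_nth_fps_expansion[OF expn, of n] by (simp add: A_def)
  have hol: "collatz_F m holomorphic_on ball 0 1"
  proof -
    have "eval_fps A holomorphic_on ball 0 1"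
    proof (rule holomorphic_on_eval_fps, rule subsetI)
      fix x :: complex assume "x \<in> ball 0 1"
      then have "ereal (norm x) < 1" by (simp add: dist_norm)
      from this rad have "ereal (norm x) < fps_conv_radius A" by (rule less_le_trans)
      then show "x \<in> eball 0 (fps_conv_radius A)" by (simp add: dist_norm)
    qed
    then show ?thesis
      by (rule holomorphic_transform) (simp add: evalA dist_norm)
  qed
  have op: "collatz_op (collatz_F m) z = collatz_F m z" if z: "norm z < 1" for z
  proof -
    have s1: "(\<lambda>n. z ^ Tn n) summable_on range e1"
      using summable_on_reindex[OF inj1, of "\<lambda>n. z ^ Tn n"] inj_summ(1)[OF injg1 z]
      by (simp add: comp_def Tn_e1)
    have s2: "(\<lambda>n. z ^ Tn n) summable_on range e2"
      using summable_on_reindex[OF inj2, of "\<lambda>n. z ^ Tn n"] inj_summ(1)[OF inj2[THEN inj_compose, of Suc] z]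
      by (simp add: comp_def Tn_e2)
    have sS: "(\<lambda>n. z ^ Tn n) summable_on S"
      unfolding S_def by (rule summable_on_Un_disjoint[OF s1 s2 disj])
    have eq: "(\<lambda>n. a n * z ^ Tn n) summable_on UNIV \<longleftrightarrow> (\<lambda>n. z ^ Tn n) summable_on S"
      by (rule summable_on_cong_neutral) (auto simp: a_def)
    have "collatz_op (collatz_F m) z = (\<Sum>n. a n * z ^ Tn n)"
      unfolding collatz_op_def Tn_def coef by simp
    also have "\<dots> = infsum (\<lambda>n. a n * z ^ Tn n) UNIV"
      using suminf_eq_infsum eq sS by blast
    also have "\<dots> = infsum (\<lambda>n. z ^ Tn n) S"
      by (rule infsum_cong_neutral) (auto simp: a_def)
    also have "\<dots> = infsum (\<lambda>n. z ^ Tn n) (range e1) + infsum (\<lambda>n. z ^ Tn n) (range e2)"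
      unfolding S_def by (rule infsum_Un_disjoint[OF s1 s2 disj])
    also have "infsum (\<lambda>n. z ^ Tn n) (range e1) = (\<Sum>p. z ^ g1 p)"
      using infsum_reindex[OF inj1, of "\<lambda>n. z ^ Tn n"] inj_summ(1)[OF injg1 z]
        suminf_eq_infsum by (simp add: comp_def Tn_e1)
    also have "infsum (\<lambda>n. z ^ Tn n) (range e2) = (\<Sum>k. z ^ e2 (Suc k))"
      using infsum_reindex[OF inj2, of "\<lambda>n. z ^ Tn n"] inj_summ(1)[OF inj2[THEN inj_compose, of Suc] z]
        suminf_eq_infsum by (simp add: comp_def Tn_e2)
    also have "(\<Sum>p. z ^ g1 p) = (\<Sum>p. z ^ e1 p) + z ^ e2 0"
      using suminf_split_head[OF inj_summ(2)[OF injg1 z]] by (simp add: g1_def)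
    also have "(\<Sum>k. z ^ e2 (Suc k)) = (\<Sum>k. z ^ e2 k) - z ^ e2 0"
      using suminf_split_head[OF inj_summ(2)[OF inj2 z]] by simp
    finally show ?thesis using Fz[of z] by simp
  qed
  show ?thesis using hol op by (simp add: dist_norm)
qed

end
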